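(* Let $X\subseteq\Omega$ be club in $\Omega$ with $0\notin X$. If $\alpha<\beta<\varepsilon_{\Omega+1}$, then $\Theta_X(\alpha)<\Theta_X(\beta)$ if and only if $\alpha^*<\Theta_X(\beta)$.
   Context: $\Omega$ is the first uncountable ordinal; $\varepsilon_{\Omega+1}$ the least $\varepsilon>\Omega$ with $\omega^\varepsilon=\varepsilon$. Every $0<\xi<\varepsilon_{\Omega+1}$ has a unique $\Omega$-normal form $\xi=\Omega^{\alpha}\beta+\gamma$ with $0<\beta<\Omega$, $\gamma<\Omega^{\alpha}$; $C(0)=\{0\}$, $C(\Omega^\alpha\beta+\gamma)=C(\alpha)\cup C(\gamma)\cup\{\beta\}$; $\xi^*=\max C(\xi)$. $\Theta_X(\xi)$ is defined by recursion on $\xi<\varepsilon_{\Omega+1}$ as the least $\theta\in X$ with $\theta>\xi^*$ such that every $\zeta<\xi$ with $\zeta^*<\theta$ satisfies $\Theta_X(\zeta)<\theta$. *)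

theory Defs
  imports "HOL-Library.Countable_Set"
begin

text \<open>The countable ordinals (the ordinals below Omega) are modelled by a well-ordered type
  'a whose every proper initial segment is countable while the whole type is uncountable,
  i.e. a type of order type omega_1.  Ordinals below epsilon_{Omega+1} are represented by
  terms in Omega-normal form:  OP a b c  stands for  Omega^a * b + c.\<close>

definition ozero :: "'a::wellorder" where
  "ozero = (LEAST x. True)"

definition omega1_type :: "'a::wellorder itself \<Rightarrow> bool" where
  "omega1_type _ \<longleftrightarrow> uncountable (UNIV :: 'a set) \<and> (\<forall>x::'a. countable {y. y < x})"

datatype 'a ot = OZ | OP "'a ot" 'a "'a ot"

fun olt :: "'a::wellorder ot \<Rightarrow> 'a ot \<Rightarrow> bool" where
  "olt OZ OZ = False"
| "olt OZ (OP _ _ _) = True"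
| "olt (OP _ _ _) OZ = False"
| "olt (OP a b c) (OP a' b' c') =
     (olt a a' \<or> (a = a' \<and> (b < b' \<or> (b = b' \<and> olt c c'))))"

fun onf :: "'a::wellorder ot \<Rightarrow> bool" where
  "onf OZ = True"
| "onf (OP a b c) = (onf a \<and> onf c \<and> ozero < b \<and>
     (case c of OZ \<Rightarrow> True | OP a' _ _ \<Rightarrow> olt a' a))"

fun oC :: "'a::wellorder ot \<Rightarrow> 'a set" where
  "oC OZ = {ozero}"
| "oC (OP a b c) = oC a \<union> oC c \<union> {b}"

definition ostar :: "'a::wellorder ot \<Rightarrow> 'a" where
  "ostar \<xi> = Max (oC \<xi>)"

definition club :: "'a::wellorder set \<Rightarrow> bool" where
  "club X \<longleftrightarrow> (\<forall>x. \<exists>y\<in>X. x < y) \<and>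
     (\<forall>S. S \<subseteq> X \<and> S \<noteq> {} \<and> (\<exists>b. \<forall>s\<in>S. s \<le> b) \<longrightarrow> (LEAST b. \<forall>s\<in>S. s \<le> b) \<in> X)"

text \<open>Theta_X, the unique function satisfying the recursive definition on normal forms
  (value ozero, irrelevant, outside normal forms).\<close>
definition Theta :: "'a::wellorder set \<Rightarrow> 'a ot \<Rightarrow> 'a" where
  "Theta X = (THE f. \<forall>\<xi>. f \<xi> = (if onf \<xi> then
      (LEAST \<theta>. \<theta> \<in> X \<and> ostar \<xi> < \<theta> \<and>
         (\<forall>\<zeta>. onf \<zeta> \<and> olt \<zeta> \<xi> \<and> ostar \<zeta> < \<theta> \<longrightarrow> f \<zeta> < \<theta>))
      else ozero))"

end

theory Submission
  imports Defs
begin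

lemma olt_trans: "olt x y \<Longrightarrow> olt y z \<Longrightarrow> olt x (z::'a::wellorder ot)"
proof (induction x arbitrary: y z)
  case OZ
  then show ?case by (cases y; cases z) auto
next
  case (OP a b c)
  obtain a1 b1 c1 where y: "y = OP a1 b1 c1" using OP.prems by (cases y) auto
  obtain a2 b2 c2 where z: "z = OP a2 b2 c2" using OP.prems y by (cases z) auto
  have h1: "olt a a1 \<or> (a = a1 \<and> (b < b1 \<or> (b = b1 \<and> olt c c1)))" using OP.prems y by simp
  have h2: "olt a1 a2 \<or> (a1 = a2 \<and> (b1 < b2 \<or> (b1 = b2 \<and> olt c1 c2)))" using OP.prems y z by simp
  have "olt a a2 \<or> (a = a2 \<and> (b < b2 \<or> (b = b2 \<and> olt c c2)))"
    using h1 h2 OP.IH less_trans by metis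
  then show ?case using z by simp
qed

lemma olt_OZ_right[simp]: "\<not> olt x OZ"
  by (cases x) auto

definition oR :: "('a::wellorder ot \<times> 'a ot) set" where
  "oR = {(s,t). onf s \<and> onf t \<and> olt s t}"

lemma OZ_acc: "OZ \<in> Wellfounded.acc oR"
  by (rule acc.accI) (auto simp: oR_def)

lemma acc_main:
  assumes "a \<in> Wellfounded.acc oR"
  shows "\<forall>b c. onf (OP a b c) \<longrightarrow> OP a b c \<in> Wellfounded.acc oR"
  using assms
proof (induction a rule: acc.induct)
  case (accI a)
  note IHa = accI.IH
  show ?case
  proof (rule allI)
    fix b
    show "\<forall>c. onf (OP a b c) \<longrightarrow> OP a b c \<in> Wellfounded.acc oR"
    proof (induction b rule: less_induct)
      case (less b)
      show ?case
      proof (intro allI impI)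
        fix c assume nc: "onf (OP a b c)"
        have cacc: "c \<in> Wellfounded.acc oR"
        proof (cases c)
          case OZ then show ?thesis using OZ_acc by simp
        next
          case (OP a'' b'' c'')
          then have "(a'', a) \<in> oR" using nc by (auto simp: oR_def)
          then show ?thesis using IHa nc OP by auto
        qed
        from cacc nc show "OP a b c \<in> Wellfounded.acc oR"
        proof (induction c rule: acc.induct)
          case (accI c)
          show ?case
          proof (rule acc.accI)
            fix s assume sR: "(s, OP a b c) \<in> oR"
            show "s \<in> Wellfounded.acc oR"
            proof (cases s)
              case OZ then show ?thesis using OZ_acc by simp
            next
              case (OP a' b' c')
              have ns: "onf s" using sR by (simp add: oR_def)
              have "olt a' a \<or> (a' = a \<and> (b' < b \<or> (b' = b \<and> olt c' c)))"
                using sR OP by (simp add: oR_def)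
              moreover
              { assume "olt a' a"
                then have "(a', a) \<in> oR" using ns OP accI.prems by (simp add: oR_def)
                then have ?thesis using IHa ns OP by auto }
              moreover
              { assume "a' = a" "b' < b"
                then have ?thesis using less ns OP by auto }
              moreover
              { assume h: "a' = a" "b' = b" "olt c' c"
                then have "(c', c) \<in> oR" using ns OP accI.prems by (simp add: oR_def)
                then have ?thesis using accI.IH ns OP h by auto }
              ultimately show ?thesis by blast
            qed
          qed
        qed
      qed
    qed
  qed
qed

lemma all_acc: "t \<in> Wellfounded.acc oR"
proof (cases "onf t")
  case False
  show ?thesis by (rule acc.accI) (use False in \<open>auto simp: oR_def\<close>)
next
  case True
  then show ?thesis
  proof (induction t)
    case OZ show ?case by (rule OZ_acc)
  next
    case (OP a b c)
    then show ?case using acc_main[of a] by auto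
  qed
qed

lemma wf_oR: "wf oR"
  by (rule acc_wfI) (use all_acc in blast)


definition FF :: "'a::wellorder set \<Rightarrow> ('a ot \<Rightarrow> 'a) \<Rightarrow> 'a ot \<Rightarrow> 'a" where
  "FF X f \<xi> = (if onf \<xi> then
      (LEAST \<theta>. \<theta> \<in> X \<and> ostar \<xi> < \<theta> \<and>
         (\<forall>\<zeta>. onf \<zeta> \<and> olt \<zeta> \<xi> \<and> ostar \<zeta> < \<theta> \<longrightarrow> f \<zeta> < \<theta>))
      else ozero)"

lemma Theta_alt: "Theta X = (THE f. \<forall>\<xi>. f \<xi> = FF X f \<xi>)"
  by (simp add: Theta_def FF_def)

lemma adm_FF: "adm_wf oR (FF X)"
  unfolding adm_wf_def
proof (intro allI impI)
  fix f g :: "'a ot \<Rightarrow> 'a" and x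
  assume H: "\<forall>z. (z, x) \<in> oR \<longrightarrow> f z = g z"
  show "FF X f x = FF X g x"
  proof (cases "onf x")
    case True
    have "\<And>\<theta>. (\<forall>\<zeta>. onf \<zeta> \<and> olt \<zeta> x \<and> ostar \<zeta> < \<theta> \<longrightarrow> f \<zeta> < \<theta>) =
              (\<forall>\<zeta>. onf \<zeta> \<and> olt \<zeta> x \<and> ostar \<zeta> < \<theta> \<longrightarrow> g \<zeta> < \<theta>)"
      using H True by (auto simp: oR_def)
    then show ?thesis using True by (simp add: FF_def)
  next
    case False
    then show ?thesis by (simp add: FF_def)
  qed
qed

lemma Theta_fix: "Theta X \<xi> = FF X (Theta X) \<xi>"
proof -
  have ex: "\<exists>!f. \<forall>\<xi>. f \<xi> = FF X f \<xi>"
  proof (rule ex_ex1I)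
    show "\<exists>f. \<forall>\<xi>. f \<xi> = FF X f \<xi>"
      using wfrec_fixpoint[OF wf_oR adm_FF, of X] by metis
  next
    fix f g
    assume f: "\<forall>\<xi>. f \<xi> = FF X f \<xi>" and g: "\<forall>\<xi>. g \<xi> = FF X g \<xi>"
    have "f x = g x" for x
      using wf_oR
    proof (induction x rule: wf_induct_rule)
      case (less x)
      have "FF X f x = FF X g x"
        using adm_FF[of X] less unfolding adm_wf_def by blast
      then show ?case using f g by metis
    qed
    then show "f = g" by blast
  qed
  show ?thesis
    unfolding Theta_alt using theI'[OF ex] by blast
qed

lemma oC_fin: "finite (oC t)" by (induction t) auto
lemma oC_ne: "oC t \<noteq> {}" by (induction t) auto
lemma set_oC: "set_ot t \<subseteq> oC t" by (induction t) auto

lemma ostar_lt: "ostar \<zeta> < \<theta> \<Longrightarrow> set_ot \<zeta> \<subseteq> {y. y < \<theta>}"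
  using set_oC[of \<zeta>] oC_fin[of \<zeta>] oC_ne[of \<zeta>]
  by (auto simp: ostar_def Max_less_iff)

instance ot :: (countable) countable
  by countable_datatype

lemma countable_terms:
  assumes "countable (A :: 'a set)"
  shows "countable {t :: 'a ot. set_ot t \<subseteq> A}"
proof -
  obtain g :: "'a \<Rightarrow> nat" where g: "inj_on g A"
    using assms unfolding countable_def by blast
  have inj: "inj_on (map_ot g) {t. set_ot t \<subseteq> A}"
  proof (rule inj_onI)
    fix x y assume "x \<in> {t. set_ot t \<subseteq> A}" "y \<in> {t. set_ot t \<subseteq> A}" "map_ot g x = map_ot g y"
    then show "x = y"
      by (intro ot.inj_map_strong[of x y g g]) (auto dest: inj_onD[OF g])
  qed
  have "countable (map_ot g ` {t. set_ot t \<subseteq> A})"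
    by (rule countableI_type)
  then show ?thesis using countable_image_inj_on inj by blast
qed

lemma countable_bounded:
  assumes "omega1_type TYPE('a::wellorder)" and "countable (S :: 'a set)"
  shows "\<exists>b. \<forall>s\<in>S. s < b"
proof -
  have seg: "countable {y::'a. y < x}" for x
    using assms(1) by (simp add: omega1_type_def)
  have "{y::'a. y \<le> s} = insert s {y. y < s}" for s by auto
  then have "countable {y::'a. y \<le> s}" for s using seg by simp
  then have c: "countable (\<Union>s\<in>S. {y. y \<le> s})"
    using assms(2) by (intro countable_UN) auto
  have "uncountable (UNIV :: 'a set)" using assms(1) by (simp add: omega1_type_def)
  then have "(\<Union>s\<in>S. {y. y \<le> s}) \<noteq> UNIV" using c by auto
  then obtain b where "b \<notin> (\<Union>s\<in>S. {y. y \<le> s})" by blast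
  then show ?thesis by (auto simp: not_le)
qed

lemma exists_theta:
  fixes X :: "'a::wellorder set" and f :: "'a ot \<Rightarrow> 'a"
  assumes om: "omega1_type TYPE('a)" and cl: "club X"
  shows "\<exists>\<theta>\<in>X. x < \<theta> \<and> (\<forall>\<zeta>. ostar \<zeta> < \<theta> \<longrightarrow> f \<zeta> < \<theta>)"
proof -
  have unb: "\<forall>x. \<exists>y\<in>X. x < y" and closed:
    "\<And>S. S \<subseteq> X \<Longrightarrow> S \<noteq> {} \<Longrightarrow> (\<exists>b. \<forall>s\<in>S. s \<le> b) \<Longrightarrow> (LEAST b. \<forall>s\<in>S. s \<le> b) \<in> X"
    using cl unfolding club_def by blast+
  have seg: "countable {y::'a. y < x}" for x
    using om by (simp add: omega1_type_def)
  have nx: "\<exists>y. y \<in> X \<and> t < y \<and> (\<forall>\<zeta>. ostar \<zeta> < t \<longrightarrow> f \<zeta> < y)" for t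
  proof -
    have "{\<zeta>. ostar \<zeta> < t} \<subseteq> {\<zeta>. set_ot \<zeta> \<subseteq> {y. y < t}}"
      using ostar_lt by blast
    then have "countable {\<zeta>. ostar \<zeta> < t}"
      using countable_terms[OF seg[of t]] countable_subset by blast
    then have "countable (insert t (f ` {\<zeta>. ostar \<zeta> < t}))" by simp
    then obtain b where b: "\<forall>s\<in>insert t (f ` {\<zeta>. ostar \<zeta> < t}). s < b"
      using countable_bounded[OF om] by blast
    obtain y where "y \<in> X" "b < y" using unb by blast
    then show ?thesis using b by (intro exI[of _ y]) (auto intro: less_trans)
  qed
  then obtain nxt where nxt: "\<And>t. nxt t \<in> X \<and> t < nxt t \<and> (\<forall>\<zeta>. ostar \<zeta> < t \<longrightarrow> f \<zeta> < nxt t)"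
    by metis
  define th where "th n = (nxt ^^ Suc n) x" for n
  have th0: "th 0 = nxt x" and thS: "th (Suc n) = nxt (th n)" for n
    by (simp_all add: th_def)
  have thX: "th n \<in> X" for n
    by (cases n) (use nxt th0 thS in auto)
  have "countable (range th)" by simp
  then obtain b where "\<forall>s\<in>range th. s < b" using countable_bounded[OF om] by blast
  then have bd: "\<exists>b. \<forall>s\<in>range th. s \<le> b" by (auto intro: less_imp_le)
  define L where "L = (LEAST b. \<forall>s\<in>range th. s \<le> b)"
  have LX: "L \<in> X" unfolding L_def
    by (rule closed) (use thX bd in auto)
  have ub: "\<forall>s\<in>range th. s \<le> L" unfolding L_def using bd by (rule LeastI_ex)
  have "x < L" using nxt[of x] th0 ub by (metis less_le_trans rangeI)
  moreover have "f \<zeta> < L" if "ostar \<zeta> < L" for \<zeta>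
  proof -
    have "\<exists>n. ostar \<zeta> < th n"
    proof (rule ccontr)
      assume "\<not> (\<exists>n. ostar \<zeta> < th n)"
      then have "\<forall>s\<in>range th. s \<le> ostar \<zeta>" by (auto simp: not_less)
      then have "L \<le> ostar \<zeta>" unfolding L_def by (rule Least_le)
      then show False using \<open>ostar \<zeta> < L\<close> by simp
    qed
    then obtain n where n: "ostar \<zeta> < th n" by blast
    then have "f \<zeta> < th (Suc n)" using nxt thS by metis
    then show ?thesis using ub by (metis less_le_trans rangeI)
  qed
  ultimately show ?thesis using LX by blast
qed

lemma Theta_prop:
  assumes om: "omega1_type TYPE('a::wellorder)" and cl: "club (X :: 'a set)" and n: "onf \<xi>"
  shows "Theta X \<xi> \<in> X \<and> ostar \<xi> < Theta X \<xi> \<and>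
         (\<forall>\<zeta>. onf \<zeta> \<and> olt \<zeta> \<xi> \<and> ostar \<zeta> < Theta X \<xi> \<longrightarrow> Theta X \<zeta> < Theta X \<xi>)"
proof -
  obtain \<theta> where "\<theta> \<in> X \<and> ostar \<xi> < \<theta> \<and> (\<forall>\<zeta>. ostar \<zeta> < \<theta> \<longrightarrow> Theta X \<zeta> < \<theta>)"
    using exists_theta[OF om cl, of "ostar \<xi>" "Theta X"] by blast
  then have ex: "\<exists>\<theta>. \<theta> \<in> X \<and> ostar \<xi> < \<theta> \<and>
         (\<forall>\<zeta>. onf \<zeta> \<and> olt \<zeta> \<xi> \<and> ostar \<zeta> < \<theta> \<longrightarrow> Theta X \<zeta> < \<theta>)" by blast
  have "Theta X \<xi> = (LEAST \<theta>. \<theta> \<in> X \<and> ostar \<xi> < \<theta> \<and>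
         (\<forall>\<zeta>. onf \<zeta> \<and> olt \<zeta> \<xi> \<and> ostar \<zeta> < \<theta> \<longrightarrow> Theta X \<zeta> < \<theta>))"
    using Theta_fix[of X \<xi>] n by (simp add: FF_def)
  then show ?thesis using LeastI_ex[OF ex] by simp
qed

theorem lemma3p2:
  fixes X :: "'a::wellorder set" and \<alpha> \<beta> :: "'a ot"
  assumes "omega1_type TYPE('a)"
    and "club X" and "ozero \<notin> X"
    and "onf \<alpha>" and "onf \<beta>" and "olt \<alpha> \<beta>"
  shows "Theta X \<alpha> < Theta X \<beta> \<longleftrightarrow> ostar \<alpha> < Theta X \<beta>"
proof
  assume "Theta X \<alpha> < Theta X \<beta>"
  moreover have "ostar \<alpha> < Theta X \<alpha>" using Theta_prop[OF assms(1,2,4)] by blast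
  ultimately show "ostar \<alpha> < Theta X \<beta>" by simp
next
  assume "ostar \<alpha> < Theta X \<beta>"
  then show "Theta X \<alpha> < Theta X \<beta>" using Theta_prop[OF assms(1,2,5)] assms(4,6) by blast
qed

end
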